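(* Let $R$ be a ring (associative with identity $1\neq 0$) which is right almost perfect and is not a prime ring. Then $R$ is right perfect.
   Context: A ring $R$ is called right almost perfect if $R/I$ is a right perfect ring for every two-sided ideal $I$ of $R$ with $I\neq 0$ and $I\neq R$. A ring is prime if for two-sided ideals $I,J$, $IJ=0$ implies $I=0$ or $J=0$. *)

theory Defs
  imports "HOL-Algebra.QuotRing" "HOL-Algebra.Ideal_Product"
begin

text \<open>Rings are HOL-Algebra rings (associative, with identity, not necessarily
commutative).  HOL-Algebra's ideal is a two-sided ideal.\<close>

definition right_ideal :: "('a, 'b) ring_scheme \<Rightarrow> 'a set \<Rightarrow> bool" where
  "right_ideal R I \<longleftrightarrow> additive_subgroup I R \<and>
     (\<forall>a\<in>I. \<forall>r\<in>carrier R. a \<otimes>\<^bsub>R\<^esub> r \<in> I)"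

definition maximal_right_ideal :: "('a, 'b) ring_scheme \<Rightarrow> 'a set \<Rightarrow> bool" where
  "maximal_right_ideal R M \<longleftrightarrow> right_ideal R M \<and> M \<noteq> carrier R \<and>
     (\<forall>I. right_ideal R I \<and> M \<subseteq> I \<longrightarrow> I = M \<or> I = carrier R)"

definition jacobson :: "('a, 'b) ring_scheme \<Rightarrow> 'a set" where
  "jacobson R = carrier R \<inter> \<Inter>{M. maximal_right_ideal R M}"

definition semisimple_ring :: "('a, 'b) ring_scheme \<Rightarrow> bool" where
  "semisimple_ring R \<longleftrightarrow> (\<forall>I. right_ideal R I \<longrightarrow>
     (\<exists>K. right_ideal R K \<and> I \<inter> K = {\<zero>\<^bsub>R\<^esub>} \<and> I <+>\<^bsub>R\<^esub> K = carrier R))"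

fun rev_prod :: "('a, 'b) ring_scheme \<Rightarrow> (nat \<Rightarrow> 'a) \<Rightarrow> nat \<Rightarrow> 'a" where
  "rev_prod R a 0 = a 0"
| "rev_prod R a (Suc n) = a (Suc n) \<otimes>\<^bsub>R\<^esub> rev_prod R a n"

text \<open>T-nilpotency condition relevant for right perfect rings: for every sequence
a_0, a_1, ... in I, some product a_n ... a_1 a_0 vanishes (equivalently, MI \<noteq> M
for every nonzero right module M).\<close>
definition T_nilpotent_for_right :: "('a, 'b) ring_scheme \<Rightarrow> 'a set \<Rightarrow> bool" where
  "T_nilpotent_for_right R I \<longleftrightarrow>
     (\<forall>a. (\<forall>n. a n \<in> I) \<longrightarrow> (\<exists>n. rev_prod R a n = \<zero>\<^bsub>R\<^esub>))"

text \<open>Bass: R is right perfect iff R/J(R) is semisimple and J(R) is T-nilpotent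
(in the sense relevant for right modules).\<close>
definition right_perfect :: "('a, 'b) ring_scheme \<Rightarrow> bool" where
  "right_perfect R \<longleftrightarrow> semisimple_ring (R Quot (jacobson R)) \<and>
     T_nilpotent_for_right R (jacobson R)"

definition right_almost_perfect :: "('a, 'b) ring_scheme \<Rightarrow> bool" where
  "right_almost_perfect R \<longleftrightarrow> (\<forall>I. ideal I R \<and> I \<noteq> {\<zero>\<^bsub>R\<^esub>} \<and> I \<noteq> carrier R
     \<longrightarrow> right_perfect (R Quot I))"

definition prime_ring :: "('a, 'b) ring_scheme \<Rightarrow> bool" where
  "prime_ring R \<longleftrightarrow> (\<forall>I J. ideal I R \<longrightarrow> ideal J R \<longrightarrow>
     I \<cdot>\<^bsub>R\<^esub> J = {\<zero>\<^bsub>R\<^esub>} \<longrightarrow> I = {\<zero>\<^bsub>R\<^esub>} \<or> J = {\<zero>\<^bsub>R\<^esub>})"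

end

theory Submission
  imports Defs
begin

no_notation Sum_Type.Plus (infixr \<open><+>\<close> 65)


lemma (in ring) right_idealI:
  assumes "I \<subseteq> carrier R" "\<zero> \<in> I" "\<And>a b. a \<in> I \<Longrightarrow> b \<in> I \<Longrightarrow> a \<oplus> b \<in> I"
    "\<And>a. a \<in> I \<Longrightarrow> \<ominus> a \<in> I" "\<And>a r. a \<in> I \<Longrightarrow> r \<in> carrier R \<Longrightarrow> a \<otimes> r \<in> I"
  shows "right_ideal R I"
  unfolding right_ideal_def
proof (intro conjI ballI)
  show "additive_subgroup I R"
    apply (rule additive_subgroupI)
    apply (rule add.subgroupI)
    using assms by (auto simp: a_inv_def[symmetric])
qed (use assms in auto)

context ring begin
lemma rI_sub: "right_ideal R I \<Longrightarrow> I \<subseteq> carrier R"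
  unfolding right_ideal_def using additive_subgroup.a_subset[of I R] by blast
lemma rI_zero: "right_ideal R I \<Longrightarrow> \<zero> \<in> I"
  unfolding right_ideal_def using additive_subgroup.zero_closed[of I R] by blast
lemma rI_add: "right_ideal R I \<Longrightarrow> a \<in> I \<Longrightarrow> b \<in> I \<Longrightarrow> a \<oplus> b \<in> I"
  unfolding right_ideal_def using additive_subgroup.a_closed[of I R a b] by blast
lemma rI_neg: "right_ideal R I \<Longrightarrow> a \<in> I \<Longrightarrow> \<ominus> a \<in> I"
  unfolding right_ideal_def using additive_subgroup.a_inv_closed[of I R a] by blast
lemma rI_mult: "right_ideal R I \<Longrightarrow> a \<in> I \<Longrightarrow> r \<in> carrier R \<Longrightarrow> a \<otimes> r \<in> I"
  unfolding right_ideal_def by blast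
lemma rI_minus: "right_ideal R I \<Longrightarrow> a \<in> I \<Longrightarrow> b \<in> I \<Longrightarrow> a \<ominus> b \<in> I"
  unfolding a_minus_def using rI_add rI_neg by blast
lemma rI_one: "right_ideal R I \<Longrightarrow> \<one> \<in> I \<Longrightarrow> I = carrier R"
  using rI_sub rI_mult by (metis l_one subsetI subset_antisym)
lemma min_add: "x \<in> carrier R \<Longrightarrow> a \<in> carrier R \<Longrightarrow> (x \<ominus> a) \<oplus> a = x"
  by (simp add: a_minus_def a_assoc l_neg)
lemma add_min: "x \<in> carrier R \<Longrightarrow> a \<in> carrier R \<Longrightarrow> a \<oplus> (x \<ominus> a) = x"
  using min_add a_comm by (metis minus_closed)
lemma add_min2: "x \<in> carrier R \<Longrightarrow> a \<in> carrier R \<Longrightarrow> (x \<oplus> a) \<ominus> a = x"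
  by (simp add: a_minus_def a_assoc r_neg)
lemma set_add_mem: "x \<in> A <+> B \<longleftrightarrow> (\<exists>a\<in>A. \<exists>b\<in>B. x = a \<oplus> b)"
  unfolding set_add_def' by auto
lemma rI_set_add: assumes A: "right_ideal R A" and B: "right_ideal R B" shows "right_ideal R (A <+> B)"
proof (rule right_idealI)
  note sA = rI_sub[OF A] and sB = rI_sub[OF B]
  show "A <+> B \<subseteq> carrier R"
  proof
    fix x assume "x \<in> A <+> B"
    then obtain a b where "a \<in> A" "b \<in> B" "x = a \<oplus> b" unfolding set_add_mem by blast
    then show "x \<in> carrier R" using sA sB by blast
  qed
  have "\<zero> = \<zero> \<oplus> \<zero>" by simp
  then show "\<zero> \<in> A <+> B" unfolding set_add_mem using rI_zero[OF A] rI_zero[OF B] by blast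
  fix a b assume "a \<in> A <+> B" "b \<in> A <+> B"
  then obtain a1 a2 b1 b2 where h: "a1 \<in> A" "a2 \<in> B" "b1 \<in> A" "b2 \<in> B" "a = a1 \<oplus> a2" "b = b1 \<oplus> b2"
    unfolding set_add_mem by blast
  have c: "a1 \<in> carrier R" "a2 \<in> carrier R" "b1 \<in> carrier R" "b2 \<in> carrier R" using h sA sB by blast+
  have "a \<oplus> b = (a1 \<oplus> b1) \<oplus> (a2 \<oplus> b2)" using c h(5,6) by (simp add: a_ac)
  moreover have "a1 \<oplus> b1 \<in> A" "a2 \<oplus> b2 \<in> B" using rI_add[OF A] rI_add[OF B] h by blast+
  ultimately show "a \<oplus> b \<in> A <+> B" unfolding set_add_mem by blast
next
  note sA = rI_sub[OF A] and sB = rI_sub[OF B]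
  fix a assume "a \<in> A <+> B"
  then obtain a1 a2 where h: "a1 \<in> A" "a2 \<in> B" "a = a1 \<oplus> a2" unfolding set_add_mem by blast
  have c: "a1 \<in> carrier R" "a2 \<in> carrier R" using h sA sB by blast+
  have "\<ominus> a = \<ominus> a1 \<oplus> \<ominus> a2" using c h(3) by (simp add: minus_add)
  moreover have "\<ominus> a1 \<in> A" "\<ominus> a2 \<in> B" using rI_neg[OF A] rI_neg[OF B] h by blast+
  ultimately show "\<ominus> a \<in> A <+> B" unfolding set_add_mem by blast
next
  note sA = rI_sub[OF A] and sB = rI_sub[OF B]
  fix a r assume "a \<in> A <+> B" and r: "r \<in> carrier R"
  then obtain a1 a2 where h: "a1 \<in> A" "a2 \<in> B" "a = a1 \<oplus> a2" unfolding set_add_mem by blast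
  have c: "a1 \<in> carrier R" "a2 \<in> carrier R" using h sA sB by blast+
  have "a \<otimes> r = a1 \<otimes> r \<oplus> a2 \<otimes> r" using c h(3) r by (simp add: l_distr)
  moreover have "a1 \<otimes> r \<in> A" "a2 \<otimes> r \<in> B" using rI_mult[OF A] rI_mult[OF B] h r by blast+
  ultimately show "a \<otimes> r \<in> A <+> B" unfolding set_add_mem by blast
qed

lemma rI_Int: "right_ideal R A \<Longrightarrow> right_ideal R B \<Longrightarrow> right_ideal R (A \<inter> B)"
  by (rule right_idealI) (auto dest: rI_sub intro: rI_zero rI_add rI_neg rI_mult)

lemma maxD: "maximal_right_ideal R M \<Longrightarrow> right_ideal R M"
  unfolding maximal_right_ideal_def by blast

lemma jac_mem: "x \<in> jacobson R \<longleftrightarrow> x \<in> carrier R \<and> (\<forall>M. maximal_right_ideal R M \<longrightarrow> x \<in> M)"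
  unfolding jacobson_def by auto

lemma colon_max:
  assumes M: "maximal_right_ideal R M" and r: "r \<in> carrier R" "r \<notin> M"
  shows "maximal_right_ideal R {y \<in> carrier R. r \<otimes> y \<in> M}" (is "maximal_right_ideal R ?M")
proof -
  have rM: "right_ideal R M" using maxD[OF M] .
  note sM = rI_sub[OF rM]
  have rM': "right_ideal R ?M"
  proof (rule right_idealI)
    show "\<zero> \<in> ?M" using r rI_zero[OF rM] by simp
    fix a b assume "a \<in> ?M" "b \<in> ?M"
    then show "a \<oplus> b \<in> ?M" using r rI_add[OF rM] by (simp add: r_distr)
  next
    fix a assume "a \<in> ?M"
    then show "\<ominus> a \<in> ?M" using r rI_neg[OF rM] by (simp add: r_minus)
  next
    fix a s assume "a \<in> ?M" "s \<in> carrier R"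
    then show "a \<otimes> s \<in> ?M" using r rI_mult[OF rM] by (simp add: m_assoc[symmetric])
  qed auto
  have ne: "?M \<noteq> carrier R"
  proof
    assume "?M = carrier R"
    then have "r \<otimes> \<one> \<in> M" by auto
    then show False using r by simp
  qed
  have mx: "I = ?M \<or> I = carrier R" if I: "right_ideal R I" "?M \<subseteq> I" for I
  proof (rule ccontr)
    assume c: "\<not> (I = ?M \<or> I = carrier R)"
    then obtain y where y: "y \<in> I" "y \<notin> ?M" using I by blast
    have yc: "y \<in> carrier R" using y rI_sub[OF I(1)] by blast
    define rI where "rI = (\<lambda>i. r \<otimes> i) ` I"
    have rrI: "right_ideal R rI" unfolding rI_def
    proof (rule right_idealI)
      show "(\<otimes>) r ` I \<subseteq> carrier R" using r rI_sub[OF I(1)] by auto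
      show "\<zero> \<in> (\<otimes>) r ` I" using r rI_zero[OF I(1)] by (force intro!: image_eqI[of _ _ \<zero>])
      fix a b assume "a \<in> (\<otimes>) r ` I" "b \<in> (\<otimes>) r ` I"
      then obtain i j where "i \<in> I" "j \<in> I" "a = r \<otimes> i" "b = r \<otimes> j" by auto
      moreover have "i \<in> carrier R" "j \<in> carrier R" using calculation rI_sub[OF I(1)] by auto
      ultimately show "a \<oplus> b \<in> (\<otimes>) r ` I" using r rI_add[OF I(1)]
        by (force simp: r_distr[symmetric] intro!: image_eqI[of _ _ "i \<oplus> j"])
    next
      fix a assume "a \<in> (\<otimes>) r ` I"
      then obtain i where "i \<in> I" "a = r \<otimes> i" by auto
      moreover have "i \<in> carrier R" using calculation rI_sub[OF I(1)] by auto
      ultimately show "\<ominus> a \<in> (\<otimes>) r ` I" using r rI_neg[OF I(1)]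
        by (force simp: r_minus[symmetric] intro!: image_eqI[of _ _ "\<ominus> i"])
    next
      fix a s assume "a \<in> (\<otimes>) r ` I" "s \<in> carrier R"
      then obtain i where "i \<in> I" "a = r \<otimes> i" by auto
      moreover have "i \<in> carrier R" using calculation rI_sub[OF I(1)] by auto
      ultimately show "a \<otimes> s \<in> (\<otimes>) r ` I" using r rI_mult[OF I(1)] \<open>s \<in> carrier R\<close>
        by (force simp: m_assoc intro!: image_eqI[of _ _ "i \<otimes> s"])
    qed
    define T where "T = M <+> rI"
    have rT: "right_ideal R T" unfolding T_def using rI_set_add[OF rM rrI] .
    have MT: "M \<subseteq> T"
    proof
      fix m assume "m \<in> M"
      moreover have "\<zero> \<in> rI" using rI_zero[OF rrI] .
      moreover have "m = m \<oplus> \<zero>" using \<open>m \<in> M\<close> sM by auto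
      ultimately show "m \<in> T" unfolding T_def set_add_mem by blast
    qed
    have "r \<otimes> y \<in> T"
    proof -
      have "r \<otimes> y \<in> rI" unfolding rI_def using y by blast
      moreover have "r \<otimes> y = \<zero> \<oplus> r \<otimes> y" using r yc by simp
      ultimately show ?thesis unfolding T_def set_add_mem using rI_zero[OF rM] by blast
    qed
    moreover have "r \<otimes> y \<notin> M" using y yc by simp
    ultimately have "T \<noteq> M" by blast
    then have "T = carrier R" using M rT MT unfolding maximal_right_ideal_def by blast
    then have "r \<in> T" using r by simp
    then obtain m i where mi: "m \<in> M" "i \<in> I" "r = m \<oplus> r \<otimes> i"
      unfolding T_def set_add_mem rI_def by blast
    have ic: "i \<in> carrier R" "m \<in> carrier R" using mi rI_sub[OF I(1)] sM by auto
    have e1: "r \<otimes> (\<one> \<ominus> i) = r \<ominus> r \<otimes> i" using ic r by (simp add: a_minus_def r_distr r_minus)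
    have e2: "(m \<oplus> r \<otimes> i) \<ominus> r \<otimes> i = m" using ic r by (simp add: add_min2)
    have "r \<otimes> (\<one> \<ominus> i) = m" using e1 e2 by (simp only: mi(3)[symmetric])
    then have "\<one> \<ominus> i \<in> ?M" using mi ic by simp
    then have "\<one> \<ominus> i \<in> I" using I by blast
    then have "(\<one> \<ominus> i) \<oplus> i \<in> I" using rI_add[OF I(1)] mi by blast
    moreover have "(\<one> \<ominus> i) \<oplus> i = \<one>" using ic by (simp add: min_add)
    ultimately have "I = carrier R" using rI_one[OF I(1)] by simp
    then show False using c by blast
  qed
  show ?thesis unfolding maximal_right_ideal_def using rM' ne mx by blast
qed

lemma jac_ideal: "ideal (jacobson R) R"
proof (rule idealI)
  show "ring R" by (rule ring_axioms)
  have rJ: "right_ideal R (jacobson R)"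
    by (rule right_idealI) (auto simp: jac_mem dest: maxD intro: rI_zero rI_add rI_neg rI_mult)
  then show "subgroup (jacobson R) (add_monoid R)"
    unfolding right_ideal_def additive_subgroup_def by blast
  fix a x assume a: "a \<in> jacobson R" and x: "x \<in> carrier R"
  show "a \<otimes> x \<in> jacobson R" using rI_mult[OF rJ a x] .
  show "x \<otimes> a \<in> jacobson R"
    unfolding jac_mem
  proof (intro conjI allI impI)
    show "x \<otimes> a \<in> carrier R" using a x by (simp add: jac_mem)
    fix M assume M: "maximal_right_ideal R M"
    show "x \<otimes> a \<in> M"
    proof (cases "x \<in> M")
      case True
      then show ?thesis using rI_mult[OF maxD[OF M]] a by (simp add: jac_mem)
    next
      case False
      then have "maximal_right_ideal R {y \<in> carrier R. x \<otimes> y \<in> M}" using colon_max[OF M x] by blast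
      then show ?thesis using a by (auto simp: jac_mem)
    qed
  qed
qed
end

definition kerh :: "('a,'b) ring_scheme \<Rightarrow> ('c,'d) ring_scheme \<Rightarrow> ('a \<Rightarrow> 'c) \<Rightarrow> 'a set" where
  "kerh R S h = {x \<in> carrier R. h x = \<zero>\<^bsub>S\<^esub>}"

definition SSc :: "('a,'b) ring_scheme \<Rightarrow> 'a set \<Rightarrow> bool" where
  "SSc R K \<longleftrightarrow> (\<forall>A. right_ideal R A \<and> K \<subseteq> A \<longrightarrow>
     (\<exists>B. right_ideal R B \<and> K \<subseteq> B \<and> A \<inter> B = K \<and> A <+>\<^bsub>R\<^esub> B = carrier R))"

locale surjhom = ring_hom_ring R S h for R (structure) and S (structure) and h +
  assumes surj: "h ` carrier R = carrier S"
begin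

lemma hom_minus: "x \<in> carrier R \<Longrightarrow> y \<in> carrier R \<Longrightarrow> h (x \<ominus> y) = h x \<ominus>\<^bsub>S\<^esub> h y"
  by (simp add: a_minus_def S.minus_eq)

lemma ker_mem: "x \<in> kerh R S h \<longleftrightarrow> x \<in> carrier R \<and> h x = \<zero>\<^bsub>S\<^esub>"
  unfolding kerh_def by simp

lemma pre_rI: "right_ideal S B \<Longrightarrow> right_ideal R (h -` B \<inter> carrier R)"
  by (rule R.right_idealI) (auto intro: S.rI_zero S.rI_add S.rI_neg S.rI_mult)

lemma img_rI: assumes A: "right_ideal R A" shows "right_ideal S (h ` A)"
proof (rule S.right_idealI)
  note sA = R.rI_sub[OF A]
  show "h ` A \<subseteq> carrier S" using sA by auto
  show "\<zero>\<^bsub>S\<^esub> \<in> h ` A" using R.rI_zero[OF A] by (force intro!: image_eqI[of _ _ \<zero>])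
  fix a b assume "a \<in> h ` A" "b \<in> h ` A"
  then obtain x y where "x \<in> A" "y \<in> A" "a = h x" "b = h y" by auto
  moreover have "x \<in> carrier R" "y \<in> carrier R" using calculation sA by blast+
  ultimately show "a \<oplus>\<^bsub>S\<^esub> b \<in> h ` A" using R.rI_add[OF A]
    by (auto intro!: image_eqI[of _ _ "x \<oplus> y"])
next
  note sA = R.rI_sub[OF A]
  fix a assume "a \<in> h ` A"
  then obtain x where "x \<in> A" "a = h x" by auto
  moreover have "x \<in> carrier R" using calculation sA by blast
  ultimately show "\<ominus>\<^bsub>S\<^esub> a \<in> h ` A" using R.rI_neg[OF A]
    by (auto intro!: image_eqI[of _ _ "\<ominus> x"])
next
  note sA = R.rI_sub[OF A]
  fix a r assume "a \<in> h ` A" "r \<in> carrier S"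
  then obtain x where "x \<in> A" "a = h x" by auto
  moreover obtain y where "y \<in> carrier R" "r = h y" using surj \<open>r \<in> carrier S\<close> by (metis imageE)
  moreover have "x \<in> carrier R" using calculation sA by blast
  ultimately show "a \<otimes>\<^bsub>S\<^esub> r \<in> h ` A" using R.rI_mult[OF A]
    by (auto intro!: image_eqI[of _ _ "x \<otimes> y"])
qed

lemma pre_img: assumes A: "right_ideal R A" and K: "kerh R S h \<subseteq> A"
  shows "h -` (h ` A) \<inter> carrier R = A"
proof
  note sA = R.rI_sub[OF A]
  show "A \<subseteq> h -` h ` A \<inter> carrier R" using sA by auto
  show "h -` h ` A \<inter> carrier R \<subseteq> A"
  proof
    fix x assume "x \<in> h -` h ` A \<inter> carrier R"
    then obtain a where a: "a \<in> A" "h x = h a" "x \<in> carrier R" by auto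
    have ac: "a \<in> carrier R" using a sA by auto
    have "x \<ominus> a \<in> kerh R S h" using a ac by (simp add: ker_mem hom_minus S.minus_eq S.r_neg)
    then have "x \<ominus> a \<in> A" using K by blast
    then have "(x \<ominus> a) \<oplus> a \<in> A" using R.rI_add[OF A] a by blast
    moreover have "(x \<ominus> a) \<oplus> a = x" using a(3) ac by (simp add: R.min_add)
    ultimately show "x \<in> A" by simp
  qed
qed

lemma img_pre: assumes "B \<subseteq> carrier S" shows "h ` (h -` B \<inter> carrier R) = B"
proof
  show "h ` (h -` B \<inter> carrier R) \<subseteq> B" by auto
  show "B \<subseteq> h ` (h -` B \<inter> carrier R)"
  proof
    fix y assume "y \<in> B"
    then obtain x where "x \<in> carrier R" "y = h x" using assms surj by (metis imageE subsetD)
    then show "y \<in> h ` (h -` B \<inter> carrier R)" using \<open>y \<in> B\<close> by blast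
  qed
qed

lemma ker_pre: "right_ideal S B \<Longrightarrow> kerh R S h \<subseteq> h -` B \<inter> carrier R"
  using S.rI_zero by (auto simp: ker_mem)

lemma max_pre: assumes M: "maximal_right_ideal S M"
  shows "maximal_right_ideal R (h -` M \<inter> carrier R)"
proof -
  have rM: "right_ideal S M" using S.maxD[OF M] .
  have ne: "h -` M \<inter> carrier R \<noteq> carrier R"
  proof
    assume "h -` M \<inter> carrier R = carrier R"
    then have "carrier S = M" using img_pre[OF S.rI_sub[OF rM]] surj by simp
    then show False using M unfolding maximal_right_ideal_def by blast
  qed
  have "I = h -` M \<inter> carrier R \<or> I = carrier R"
    if I: "right_ideal R I" "h -` M \<inter> carrier R \<subseteq> I" for I
  proof -
    have MI: "M \<subseteq> h ` I" using image_mono[OF I(2), of h] img_pre[OF S.rI_sub[OF rM]] by simp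
    have "h ` I = M \<or> h ` I = carrier S" using M img_rI[OF I(1)] MI
      unfolding maximal_right_ideal_def by blast
    then show ?thesis
    proof
      assume "h ` I = M"
      then have "I \<subseteq> h -` M \<inter> carrier R" using R.rI_sub[OF I(1)] by auto
      then show ?thesis using I(2) by blast
    next
      assume "h ` I = carrier S"
      then obtain i where i: "i \<in> I" "h i = \<one>\<^bsub>S\<^esub>" by (metis S.one_closed imageE)
      have ic: "i \<in> carrier R" using i R.rI_sub[OF I(1)] by auto
      have "\<one> \<ominus> i \<in> kerh R S h" using i ic by (simp add: ker_mem hom_minus S.minus_eq S.r_neg)
      then have "\<one> \<ominus> i \<in> I" using ker_pre[OF rM] I(2) by blast
      then have "(\<one> \<ominus> i) \<oplus> i \<in> I" using R.rI_add[OF I(1)] i by blast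
      moreover have "(\<one> \<ominus> i) \<oplus> i = \<one>" using ic by (simp add: R.min_add)
      ultimately show ?thesis using R.rI_one[OF I(1)] by simp
    qed
  qed
  then show ?thesis unfolding maximal_right_ideal_def using pre_rI[OF rM] ne by blast
qed

lemma max_img: assumes M: "maximal_right_ideal R M" and K: "kerh R S h \<subseteq> M"
  shows "maximal_right_ideal S (h ` M)"
proof -
  have rM: "right_ideal R M" using R.maxD[OF M] .
  have ne: "h ` M \<noteq> carrier S"
  proof
    assume "h ` M = carrier S"
    then obtain i where i: "i \<in> M" "h i = \<one>\<^bsub>S\<^esub>" by (metis S.one_closed imageE)
    have ic: "i \<in> carrier R" using i R.rI_sub[OF rM] by auto
    have "\<one> \<ominus> i \<in> kerh R S h" using i ic by (simp add: ker_mem hom_minus S.minus_eq S.r_neg)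
    then have "\<one> \<ominus> i \<in> M" using K by blast
    then have "(\<one> \<ominus> i) \<oplus> i \<in> M" using R.rI_add[OF rM] i by blast
    moreover have "(\<one> \<ominus> i) \<oplus> i = \<one>" using ic by (simp add: R.min_add)
    ultimately have "M = carrier R" using R.rI_one[OF rM] by simp
    then show False using M unfolding maximal_right_ideal_def by blast
  qed
  have "I = h ` M \<or> I = carrier S" if I: "right_ideal S I" "h ` M \<subseteq> I" for I
  proof -
    have "M \<subseteq> h -` I \<inter> carrier R" using I(2) R.rI_sub[OF rM] by auto
    then have "h -` I \<inter> carrier R = M \<or> h -` I \<inter> carrier R = carrier R"
      using M pre_rI[OF I(1)] unfolding maximal_right_ideal_def by blast
    then show ?thesis
    proof
      assume "h -` I \<inter> carrier R = M"
      then show ?thesis using img_pre[OF S.rI_sub[OF I(1)]] by metis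
    next
      assume "h -` I \<inter> carrier R = carrier R"
      then show ?thesis using img_pre[OF S.rI_sub[OF I(1)]] surj by metis
    qed
  qed
  then show ?thesis unfolding maximal_right_ideal_def using img_rI[OF rM] ne by blast
qed

lemma jac_pre: "h -` jacobson S \<inter> carrier R = carrier R \<inter> \<Inter>{M. maximal_right_ideal R M \<and> kerh R S h \<subseteq> M}"
proof (intro equalityI subsetI)
  fix x assume x: "x \<in> h -` jacobson S \<inter> carrier R"
  have "x \<in> M" if M: "maximal_right_ideal R M" "kerh R S h \<subseteq> M" for M
  proof -
    have "h x \<in> h ` M" using x max_img[OF M] by (auto simp: S.jac_mem)
    then show ?thesis using pre_img[OF R.maxD[OF M(1)] M(2)] x by blast
  qed
  then show "x \<in> carrier R \<inter> \<Inter>{M. maximal_right_ideal R M \<and> kerh R S h \<subseteq> M}" using x by blast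
next
  fix x assume x: "x \<in> carrier R \<inter> \<Inter>{M. maximal_right_ideal R M \<and> kerh R S h \<subseteq> M}"
  have "h x \<in> M" if M: "maximal_right_ideal S M" for M
    using x max_pre[OF M] ker_pre[OF S.maxD[OF M]] by blast
  then show "x \<in> h -` jacobson S \<inter> carrier R" using x by (auto simp: S.jac_mem)
qed

lemma jac_img: "x \<in> jacobson R \<Longrightarrow> h x \<in> jacobson S"
  using max_pre by (auto simp: R.jac_mem S.jac_mem)

lemma ss_down: assumes ss: "semisimple_ring S" shows "SSc R (kerh R S h)"
  unfolding SSc_def
proof (intro allI impI)
  fix A assume A: "right_ideal R A \<and> kerh R S h \<subseteq> A"
  note sA = R.rI_sub[of A]
  obtain B' where B': "right_ideal S B'" "h ` A \<inter> B' = {\<zero>\<^bsub>S\<^esub>}" "h ` A <+>\<^bsub>S\<^esub> B' = carrier S"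
    using ss img_rI A unfolding semisimple_ring_def by blast
  define B where "B = h -` B' \<inter> carrier R"
  have rB: "right_ideal R B" unfolding B_def using pre_rI[OF B'(1)] .
  have KB: "kerh R S h \<subseteq> B" unfolding B_def using ker_pre[OF B'(1)] .
  have "A \<inter> B \<subseteq> kerh R S h"
  proof
    fix x assume "x \<in> A \<inter> B"
    then have "h x \<in> h ` A \<inter> B'" "x \<in> carrier R" unfolding B_def by auto
    then show "x \<in> kerh R S h" using B'(2) by (auto simp: ker_mem)
  qed
  then have AB: "A \<inter> B = kerh R S h" using A KB by blast
  have "carrier R \<subseteq> A <+> B"
  proof
    fix r assume r: "r \<in> carrier R"
    then have "h r \<in> h ` A <+>\<^bsub>S\<^esub> B'" using B'(3) by auto
    then obtain a b' where ab: "a \<in> A" "b' \<in> B'" "h r = h a \<oplus>\<^bsub>S\<^esub> b'" unfolding S.set_add_mem by blast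
    have ac: "a \<in> carrier R" using ab A sA by blast
    have bc: "b' \<in> carrier S" using ab S.rI_sub[OF B'(1)] by blast
    have "h (r \<ominus> a) = (b' \<oplus>\<^bsub>S\<^esub> h a) \<ominus>\<^bsub>S\<^esub> h a"
      using ab ac r bc by (simp add: hom_minus S.a_comm)
    also have "\<dots> = b'" using bc ac by (simp add: S.add_min2)
    finally have "h (r \<ominus> a) = b'" .
    then have "r \<ominus> a \<in> B" unfolding B_def using ab r ac by auto
    moreover have "r = a \<oplus> (r \<ominus> a)" using r ac by (simp add: R.add_min)
    ultimately show "r \<in> A <+> B" unfolding R.set_add_mem using ab by blast
  qed
  moreover have "A <+> B \<subseteq> carrier R" using R.rI_sub[OF R.rI_set_add[OF _ rB]] A by blast
  ultimately show "\<exists>B. right_ideal R B \<and> kerh R S h \<subseteq> B \<and> A \<inter> B = kerh R S h \<and> A <+> B = carrier R"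
    using rB KB AB by blast
qed

lemma ss_up: assumes ss: "SSc R (kerh R S h)" shows "semisimple_ring S"
  unfolding semisimple_ring_def
proof (intro allI impI)
  fix A' assume A': "right_ideal S A'"
  define A where "A = h -` A' \<inter> carrier R"
  have rA: "right_ideal R A" unfolding A_def using pre_rI[OF A'] .
  have KA: "kerh R S h \<subseteq> A" unfolding A_def using ker_pre[OF A'] .
  obtain B where B: "right_ideal R B" "kerh R S h \<subseteq> B" "A \<inter> B = kerh R S h" "A <+> B = carrier R"
    using ss rA KA unfolding SSc_def by blast
  have hA: "h ` A = A'" unfolding A_def using img_pre[OF S.rI_sub[OF A']] .
  have "A' \<inter> h ` B \<subseteq> {\<zero>\<^bsub>S\<^esub>}"
  proof
    fix y assume "y \<in> A' \<inter> h ` B"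
    then obtain b where b: "b \<in> B" "y = h b" "h b \<in> A'" by auto
    then have "b \<in> A" unfolding A_def using R.rI_sub[OF B(1)] by auto
    then have "b \<in> kerh R S h" using b B(3) by blast
    then show "y \<in> {\<zero>\<^bsub>S\<^esub>}" using b by (simp add: ker_mem)
  qed
  moreover have "\<zero>\<^bsub>S\<^esub> \<in> A' \<inter> h ` B"
    using S.rI_zero[OF A'] S.rI_zero[OF img_rI[OF B(1)]] by blast
  ultimately have i: "A' \<inter> h ` B = {\<zero>\<^bsub>S\<^esub>}" by blast
  have "carrier S \<subseteq> A' <+>\<^bsub>S\<^esub> h ` B"
  proof
    fix s assume "s \<in> carrier S"
    then obtain r where r: "r \<in> carrier R" "s = h r" using surj by auto
    have "r \<in> A <+> B" using B(4) r by simp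
    then obtain a b where ab: "a \<in> A" "b \<in> B" "r = a \<oplus> b" unfolding R.set_add_mem by blast
    have "a \<in> carrier R" "b \<in> carrier R" using ab R.rI_sub[OF rA] R.rI_sub[OF B(1)] by auto
    then have "s = h a \<oplus>\<^bsub>S\<^esub> h b" using r ab by simp
    then show "s \<in> A' <+>\<^bsub>S\<^esub> h ` B" unfolding S.set_add_mem using ab hA by blast
  qed
  moreover have "A' <+>\<^bsub>S\<^esub> h ` B \<subseteq> carrier S"
    using S.rI_sub[OF S.rI_set_add[OF A' img_rI[OF B(1)]]] .
  ultimately show "\<exists>K. right_ideal S K \<and> A' \<inter> K = {\<zero>\<^bsub>S\<^esub>} \<and> A' <+>\<^bsub>S\<^esub> K = carrier S"
    using i img_rI[OF B(1)] by blast
qed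

end



lemma quot_surjhom: assumes "ideal I R" shows "surjhom R (R Quot I) ((+>\<^bsub>R\<^esub>) I)"
proof -
  interpret ideal I R by fact
  show ?thesis
    apply (rule surjhom.intro[OF rcos_ring_hom_ring])
    apply (rule surjhom_axioms.intro)
    by (auto simp: FactRing_def A_RCOSETS_def')
qed

lemma quot_ker: assumes "ideal I R" shows "kerh R (R Quot I) ((+>\<^bsub>R\<^esub>) I) = I"
proof -
  interpret ideal I R by fact
  have z: "\<zero>\<^bsub>R Quot I\<^esub> = I" by (simp add: FactRing_def)
  show ?thesis
  proof (intro equalityI subsetI)
    fix x assume "x \<in> kerh R (R Quot I) ((+>\<^bsub>R\<^esub>) I)"
    then have "x \<in> carrier R" "I +>\<^bsub>R\<^esub> x = I" unfolding kerh_def z by auto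
    then show "x \<in> I" using rcos_const_imp_mem by blast
  next
    fix x assume x: "x \<in> I"
    then have "x \<in> carrier R" "I +>\<^bsub>R\<^esub> x = I" using a_rcos_zero[OF is_ideal] Icarr by auto
    then show "x \<in> kerh R (R Quot I) ((+>\<^bsub>R\<^esub>) I)" unfolding kerh_def z by auto
  qed
qed

lemma comp_surjhom: assumes "surjhom R S h" "surjhom S T g" shows "surjhom R T (g \<circ> h)"
proof -
  interpret A: surjhom R S h by fact
  interpret B: surjhom S T g by fact
  show ?thesis
    apply (rule surjhom.intro[OF ring_hom_ringI2])
    apply (rule A.R.ring_axioms)
    apply (rule B.S.ring_axioms)
    apply (rule ring_hom_trans[OF A.homh B.homh])
    apply (rule surjhom_axioms.intro)
    using A.surj B.surj by (metis image_comp)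
qed

lemma comp_ker: assumes "surjhom R S h" shows "kerh R T (g \<circ> h) = h -` kerh S T g \<inter> carrier R"
proof -
  interpret A: surjhom R S h by fact
  show ?thesis unfolding kerh_def by auto
qed

context ring begin

lemma ideal_rI: "ideal I R \<Longrightarrow> right_ideal R I"
  unfolding right_ideal_def ideal_def ideal_axioms_def by blast


lemma SSc_Int:
  assumes X: "right_ideal R X" and Y: "right_ideal R Y" and sX: "SSc R X" and sY: "SSc R Y"
  shows "SSc R (X \<inter> Y)"
  unfolding SSc_def
proof (intro allI impI)
  fix A assume A: "right_ideal R A \<and> X \<inter> Y \<subseteq> A"
  note sub = rI_sub[OF X] rI_sub[OF Y] rI_sub[of A]
  have rN1: "right_ideal R (A <+> X)" using rI_set_add A X by blast
  have XN1: "X \<subseteq> A <+> X"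
  proof
    fix x assume "x \<in> X"
    moreover have "x = \<zero> \<oplus> x" using \<open>x \<in> X\<close> sub by auto
    ultimately show "x \<in> A <+> X" unfolding set_add_mem using rI_zero A by blast
  qed
  obtain C1 where C1: "right_ideal R C1" "X \<subseteq> C1" "(A <+> X) \<inter> C1 = X" "(A <+> X) <+> C1 = carrier R"
    using sX rN1 XN1 unfolding SSc_def by blast
  define Z where "Z = A \<inter> X"
  have rZ: "right_ideal R Z" unfolding Z_def using rI_Int A X by blast
  have rZY: "right_ideal R (Z <+> Y)" using rI_set_add[OF rZ Y] .
  have YZY: "Y \<subseteq> Z <+> Y"
  proof
    fix x assume "x \<in> Y"
    moreover have "x = \<zero> \<oplus> x" using \<open>x \<in> Y\<close> sub by auto
    ultimately show "x \<in> Z <+> Y" unfolding set_add_mem using rI_zero[OF rZ] by blast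
  qed
  obtain W where W: "right_ideal R W" "Y \<subseteq> W" "(Z <+> Y) \<inter> W = Y" "(Z <+> Y) <+> W = carrier R"
    using sY rZY YZY unfolding SSc_def by blast
  define C where "C = C1 \<inter> W"
  have rC: "right_ideal R C" unfolding C_def using rI_Int C1(1) W(1) by blast
  have DC: "X \<inter> Y \<subseteq> C" unfolding C_def using C1(2) W(2) by blast
  have "A \<inter> C \<subseteq> X \<inter> Y"
  proof
    fix x assume x: "x \<in> A \<inter> C"
    have xc: "x \<in> carrier R" using x A sub by blast
    have x0: "x = x \<oplus> \<zero>" using xc by simp
    have "x \<in> A <+> X" using x x0 rI_zero[OF X] unfolding set_add_mem by blast
    then have xX: "x \<in> X" using x C1(3) unfolding C_def by blast
    then have "x \<in> Z" using x unfolding Z_def by blast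
    then have "x \<in> Z <+> Y" using x0 rI_zero[OF Y] unfolding set_add_mem by blast
    then have "x \<in> Y" using x W(3) unfolding C_def by blast
    then show "x \<in> X \<inter> Y" using xX by blast
  qed
  then have AC: "A \<inter> C = X \<inter> Y" using A DC by blast
  have "carrier R \<subseteq> A <+> C"
  proof
    fix r assume r: "r \<in> carrier R"
    have "r \<in> (A <+> X) <+> C1" using r C1(4) by blast
    then have "\<exists>n\<in>A <+> X. \<exists>c1\<in>C1. r = n \<oplus> c1" by (rule set_add_mem[THEN iffD1])
    then obtain n c1 where n: "n \<in> A <+> X" "c1 \<in> C1" "r = n \<oplus> c1" by blast
    then obtain a x0 where ax: "a \<in> A" "x0 \<in> X" "n = a \<oplus> x0" unfolding set_add_mem by blast
    have sA: "A \<subseteq> carrier R" using A rI_sub by blast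
    have cs: "a \<in> carrier R" "x0 \<in> carrier R" "c1 \<in> carrier R" using ax n sA sub(1) rI_sub[OF C1(1)] by blast+
    define c where "c = x0 \<oplus> c1"
    have cC1: "c \<in> C1" unfolding c_def using rI_add[OF C1(1)] C1(2) ax n by blast
    have rac: "r = a \<oplus> c" unfolding c_def using n ax cs by (simp add: a_assoc)
    have cc: "c \<in> carrier R" using cs c_def by simp
    then have "c \<in> (Z <+> Y) <+> W" using W(4) by blast
    then have "\<exists>zy\<in>Z <+> Y. \<exists>w\<in>W. c = zy \<oplus> w" by (rule set_add_mem[THEN iffD1])
    then obtain zy w where zw: "zy \<in> Z <+> Y" "w \<in> W" "c = zy \<oplus> w" by blast
    then obtain z y where zy: "z \<in> Z" "y \<in> Y" "zy = z \<oplus> y" unfolding set_add_mem by blast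
    have cs2: "z \<in> carrier R" "y \<in> carrier R" "w \<in> carrier R" using zw zy sub(2) rI_sub[OF W(1)] rI_sub[OF rZ] by blast+
    have ywW: "y \<oplus> w \<in> W" using rI_add[OF W(1)] W(2) zy zw by blast
    have cz: "c = z \<oplus> (y \<oplus> w)" using zw zy cs2 by (simp add: a_assoc)
    have "c = (y \<oplus> w) \<oplus> z" using cz cs2 a_comm[of z "y \<oplus> w"] by simp
    then have "y \<oplus> w = c \<ominus> z" using cs2 add_min2[of "y \<oplus> w" z] by simp
    moreover have "c \<ominus> z \<in> C1" using rI_minus[OF C1(1) cC1] zy C1(2) unfolding Z_def by blast
    ultimately have ywC: "y \<oplus> w \<in> C" using ywW unfolding C_def by simp
    have "a \<oplus> z \<in> A" using rI_add A ax zy unfolding Z_def by blast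
    moreover have "r = (a \<oplus> z) \<oplus> (y \<oplus> w)" using rac cz cs cs2 by (simp add: a_assoc)
    ultimately show "r \<in> A <+> C" unfolding set_add_mem using ywC by blast
  qed
  moreover have "A <+> C \<subseteq> carrier R" using rI_sub[OF rI_set_add[OF _ rC]] A by blast
  ultimately show "\<exists>B. right_ideal R B \<and> X \<inter> Y \<subseteq> B \<and> A \<inter> B = X \<inter> Y \<and> A <+> B = carrier R"
    using rC DC AC by blast
qed

lemma rev_prod_closed: "(\<And>k. a k \<in> carrier R) \<Longrightarrow> rev_prod R a n \<in> carrier R"
  by (induction n) auto

lemma rev_prod_split: assumes "\<And>k. a k \<in> carrier R"
  shows "rev_prod R a (m + Suc n) = rev_prod R (\<lambda>k. a (k + Suc n)) m \<otimes> rev_prod R a n"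
proof (induction m)
  case 0 then show ?case by simp
next
  case (Suc m)
  have "rev_prod R a (Suc m + Suc n) = a (Suc m + Suc n) \<otimes> rev_prod R a (m + Suc n)" by simp
  also have "\<dots> = a (Suc m + Suc n) \<otimes> (rev_prod R (\<lambda>k. a (k + Suc n)) m \<otimes> rev_prod R a n)"
    using Suc by simp
  also have "\<dots> = (a (Suc m + Suc n) \<otimes> rev_prod R (\<lambda>k. a (k + Suc n)) m) \<otimes> rev_prod R a n"
    using assms rev_prod_closed[of "\<lambda>k. a (k + Suc n)"] rev_prod_closed[of a] by (simp add: m_assoc)
  finally show ?case by simp
qed

end

lemma rev_prod_hom: assumes "surjhom R S h" "\<And>k. a k \<in> carrier R"
  shows "rev_prod S (h \<circ> a) n = h (rev_prod R a n)"
proof -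
  interpret surjhom R S h by fact
  show ?thesis using assms(2) by (induction n) (auto simp: R.rev_prod_closed)
qed



lemma perfect_quot:
  fixes R :: "('a, 'b) ring_scheme"
  assumes R: "ring R" and I: "ideal I R" and P: "right_perfect (R Quot I)"
  shows "SSc R (carrier R \<inter> \<Inter>{M. maximal_right_ideal R M \<and> I \<subseteq> M})"
    and "\<And>a. (\<And>n. a n \<in> jacobson R) \<Longrightarrow> \<exists>n. rev_prod R a n \<in> I"
proof -
  interpret ring R by fact
  let ?S = "R Quot I"
  let ?p1 = "(+>\<^bsub>R\<^esub>) I"
  let ?p2 = "(+>\<^bsub>?S\<^esub>) (jacobson ?S)"
  have h1: "surjhom R ?S ?p1" by (rule quot_surjhom[OF I])
  have rS: "ring ?S" using ideal.quotient_is_ring[OF I] .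
  have jS: "ideal (jacobson ?S) ?S" using ring.jac_ideal[OF rS] .
  have h2: "surjhom ?S (?S Quot jacobson ?S) ?p2" by (rule quot_surjhom[OF jS])
  have h: "surjhom R (?S Quot jacobson ?S) (?p2 \<circ> ?p1)" by (rule comp_surjhom[OF h1 h2])
  have "kerh R (?S Quot jacobson ?S) (?p2 \<circ> ?p1) = ?p1 -` jacobson ?S \<inter> carrier R"
    unfolding comp_ker[OF h1, of "?S Quot jacobson ?S" ?p2] quot_ker[OF jS] ..
  also have "\<dots> = carrier R \<inter> \<Inter>{M. maximal_right_ideal R M \<and> I \<subseteq> M}"
    using surjhom.jac_pre[OF h1] quot_ker[OF I] by simp
  finally have ker: "kerh R (?S Quot jacobson ?S) (?p2 \<circ> ?p1) = carrier R \<inter> \<Inter>{M. maximal_right_ideal R M \<and> I \<subseteq> M}" .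
  have ss: "semisimple_ring (?S Quot jacobson ?S)" using P unfolding right_perfect_def by blast
  show "SSc R (carrier R \<inter> \<Inter>{M. maximal_right_ideal R M \<and> I \<subseteq> M})"
    using surjhom.ss_down[OF h ss] ker by simp
  fix a :: "nat \<Rightarrow> 'a" assume a: "\<And>n. a n \<in> jacobson R"
  have ac: "\<And>k. a k \<in> carrier R" using a jac_mem by blast
  have "\<forall>n. (?p1 \<circ> a) n \<in> jacobson ?S" using surjhom.jac_img[OF h1] a by simp
  then obtain n where "rev_prod ?S (?p1 \<circ> a) n = \<zero>\<^bsub>?S\<^esub>"
    using P unfolding right_perfect_def T_nilpotent_for_right_def by blast
  then have "?p1 (rev_prod R a n) = \<zero>\<^bsub>?S\<^esub>" using rev_prod_hom[OF h1 ac] by simp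
  then have "rev_prod R a n \<in> kerh R ?S ?p1" unfolding kerh_def using rev_prod_closed ac by blast
  then show "\<exists>n. rev_prod R a n \<in> I" using quot_ker[OF I] by blast
qed

lemma (in ring) max_contains:
  assumes I: "ideal I R" and J: "ideal J R" and p: "\<And>i j. i \<in> I \<Longrightarrow> j \<in> J \<Longrightarrow> i \<otimes> j = \<zero>"
    and M: "maximal_right_ideal R M"
  shows "I \<subseteq> M \<or> J \<subseteq> M"
proof (rule ccontr)
  assume c: "\<not> (I \<subseteq> M \<or> J \<subseteq> M)"
  then obtain i0 where i0: "i0 \<in> I" "i0 \<notin> M" by blast
  have rM: "right_ideal R M" using maxD[OF M] .
  have rI: "right_ideal R I" using ideal_rI[OF I] .
  note sM = rI_sub[OF rM] and sI = rI_sub[OF rI]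
  define T where "T = M <+>\<^bsub>R\<^esub> I"
  have rT: "right_ideal R T" unfolding T_def using rI_set_add[OF rM rI] .
  have MT: "M \<subseteq> T"
  proof
    fix m assume m: "m \<in> M"
    have "m = m \<oplus> \<zero>" using m sM by auto
    then show "m \<in> T" unfolding T_def set_add_mem using m rI_zero[OF rI] by blast
  qed
  have "i0 = \<zero> \<oplus> i0" using i0 sI by auto
  then have "i0 \<in> T" unfolding T_def set_add_mem using i0 rI_zero[OF rM] by blast
  then have "T \<noteq> M" using i0 by blast
  then have "T = carrier R" using M rT MT unfolding maximal_right_ideal_def by blast
  then have "\<one> \<in> M <+> I" unfolding T_def by simp
  then have "\<exists>m\<in>M. \<exists>i\<in>I. \<one> = m \<oplus> i" by (rule set_add_mem[THEN iffD1])
  then obtain m i where mi: "m \<in> M" "i \<in> I" "\<one> = m \<oplus> i" by blast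
  have mic: "m \<in> carrier R" "i \<in> carrier R" using mi sM sI by blast+
  have "J \<subseteq> M"
  proof
    fix j assume j: "j \<in> J"
    have jc: "j \<in> carrier R" using j ideal.Icarr[OF J] by blast
    have "j = \<one> \<otimes> j" using jc by simp
    also have "\<dots> = m \<otimes> j \<oplus> i \<otimes> j" using mi(3) mic jc by (simp add: l_distr)
    also have "\<dots> = m \<otimes> j" using p[OF mi(2) j] mic jc by simp
    finally show "j \<in> M" using rI_mult[OF rM mi(1) jc] by simp
  qed
  then show False using c by blast
qed

lemma (in ring) main_aux:
  assumes "right_almost_perfect R"
    and "\<not> prime_ring R"
  shows "right_perfect R"
proof -
  obtain I J where I: "ideal I R" and J: "ideal J R" and IJ: "I \<cdot> J = {\<zero>}"
    and I0: "I \<noteq> {\<zero>}" and J0: "J \<noteq> {\<zero>}"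
    using assms(2) unfolding prime_ring_def by blast
  have p: "\<And>i j. i \<in> I \<Longrightarrow> j \<in> J \<Longrightarrow> i \<otimes> j = \<zero>"
    using IJ ideal_prod.prod[of _ I _ J R] by blast
  have zI: "\<zero> \<in> I" using ideal.axioms(1)[OF I] additive_subgroup.zero_closed by blast
  have zJ: "\<zero> \<in> J" using ideal.axioms(1)[OF J] additive_subgroup.zero_closed by blast
  have Ic: "I \<noteq> carrier R"
  proof
    assume "I = carrier R"
    then have "\<one> \<in> I" by simp
    then have "\<forall>j\<in>J. j = \<zero>" using p ideal.Icarr[OF J] by (metis l_one)
    then show False using J0 zJ by blast
  qed
  have Jc: "J \<noteq> carrier R"
  proof
    assume "J = carrier R"
    then have "\<one> \<in> J" by simp
    then have "\<forall>i\<in>I. i = \<zero>" using p ideal.Icarr[OF I] by (metis r_one)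
    then show False using I0 zI by blast
  qed
  have PI: "right_perfect (R Quot I)" using assms(1) I I0 Ic unfolding right_almost_perfect_def by blast
  have PJ: "right_perfect (R Quot J)" using assms(1) J J0 Jc unfolding right_almost_perfect_def by blast
  define X where "X = carrier R \<inter> \<Inter>{M. maximal_right_ideal R M \<and> I \<subseteq> M}"
  define Y where "Y = carrier R \<inter> \<Inter>{M. maximal_right_ideal R M \<and> J \<subseteq> M}"
  have sX: "SSc R X" unfolding X_def using perfect_quot(1)[OF ring_axioms I PI] .
  have sY: "SSc R Y" unfolding Y_def using perfect_quot(1)[OF ring_axioms J PJ] .
  have rX: "right_ideal R X" unfolding X_def
    by (rule right_idealI) (auto dest: maxD intro: rI_zero rI_add rI_neg rI_mult)
  have rY: "right_ideal R Y" unfolding Y_def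
    by (rule right_idealI) (auto dest: maxD intro: rI_zero rI_add rI_neg rI_mult)
  have jXY: "jacobson R = X \<inter> Y"
    unfolding X_def Y_def jacobson_def using max_contains[OF I J p] by blast
  have sJ: "SSc R (jacobson R)" using SSc_Int[OF rX rY sX sY] jXY by simp
  have jI: "ideal (jacobson R) R" by (rule jac_ideal)
  have ss: "semisimple_ring (R Quot jacobson R)"
    using surjhom.ss_up[OF quot_surjhom[OF jI]] quot_ker[OF jI] sJ by simp
  have tn: "T_nilpotent_for_right R (jacobson R)"
    unfolding T_nilpotent_for_right_def
  proof (intro allI impI)
    fix a :: "nat \<Rightarrow> 'a" assume a: "\<forall>n. a n \<in> jacobson R"
    have ac: "\<And>k. a k \<in> carrier R" using a jac_mem by blast
    obtain n where n: "rev_prod R a n \<in> J" using perfect_quot(2)[OF ring_axioms J PJ, of a] a by blast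
    obtain m where m: "rev_prod R (\<lambda>k. a (k + Suc n)) m \<in> I"
      using perfect_quot(2)[OF ring_axioms I PI, of "\<lambda>k. a (k + Suc n)"] a by blast
    have "rev_prod R a (m + Suc n) = rev_prod R (\<lambda>k. a (k + Suc n)) m \<otimes> rev_prod R a n"
      by (rule rev_prod_split[OF ac])
    also have "\<dots> = \<zero>" using p[OF m n] .
    finally show "\<exists>n. rev_prod R a n = \<zero>" by blast
  qed
  show ?thesis unfolding right_perfect_def using ss tn by blast
qed

theorem theorem3p1:
  fixes R :: "('a, 'b) ring_scheme"
  assumes "ring R"
    and "\<one>\<^bsub>R\<^esub> \<noteq> \<zero>\<^bsub>R\<^esub>"
    and "right_almost_perfect R"
    and "\<not> prime_ring R"
  shows "right_perfect R"
  using ring.main_aux[OF assms(1) assms(3) assms(4)] .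

end
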